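(* Let $L>0$ be an integer, $m\ge1$, and for each $i\in\{1,\dots,m\}$ let $J_i>0$ and positive real constants $a_i,b_i,c_i,d_i$ be fixed. For a total arrival rate $\lambda>0$ and fractions $p_i>0$ with $\sum_ip_i=1$, define for variables $k_i>0$, $r_i\ge1$: $U_i = a_i k_i r_i + b_i J_i r_i + c_i k_i + d_i J_i$, $\Lambda=\lambda\sum_i p_iU_i$, $D_q=\frac{\Lambda^2}{\lambda L(L-\Lambda)}$, $D_{s,i}= a_i+\frac{b_iJ_i}{k_i}+\big(c_i+\frac{d_iJ_i}{k_i}\big)\ln\frac{r_i}{r_i-1}$, and consider the problem of minimizing $D_q+\sum_ip_iD_{s,i}$ subject to $k_i>0$, $r_i\ge1$, $\Lambda<L$, whose optimal solution is unique. Let $n_i=k_ir_i$ and let $Q=\frac{\Lambda^2}{L(L-\Lambda)}$ (the approximate expected request-queue length) evaluated at the optimal solution. Then there exist strictly decreasing functions $N_i,K_i,R_i$ (depending only on $L$, $J_i$ and the constants $a_i,b_i,c_i,d_i$) such that, for every choice of $\lambda$ and $\{p_i\}$, the optimal values satisfy $$n_i=N_i(Q),\qquad k_i=K_i(Q),\qquad r_i=R_i(Q).$$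
   Context: Model: a request of class $i$ (file size $J_i$) is served with an $(n_i,k_i)$ MDS code with redundancy ratio $r_i=n_i/k_i$, relaxed to real values; $a_i+b_iB$ is the minimum task delay and $c_i+d_iB$ the mean of the exponential tail of task delay for chunk size $B$; $L$ is the number of parallel threads; $D_q$ and $D_{s,i}$ are the approximated queueing and service delays. *)

theory Defs
  imports Complex_Main
begin

definition U :: "(nat \<Rightarrow> real) \<Rightarrow> (nat \<Rightarrow> real) \<Rightarrow> (nat \<Rightarrow> real) \<Rightarrow> (nat \<Rightarrow> real)
   \<Rightarrow> (nat \<Rightarrow> real) \<Rightarrow> (nat \<Rightarrow> real) \<Rightarrow> (nat \<Rightarrow> real) \<Rightarrow> nat \<Rightarrow> real" where
  "U J a b c d k r i = a i * k i * r i + b i * J i * r i + c i * k i + d i * J i"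

definition Lam :: "nat \<Rightarrow> real \<Rightarrow> (nat \<Rightarrow> real) \<Rightarrow> (nat \<Rightarrow> real) \<Rightarrow> (nat \<Rightarrow> real) \<Rightarrow> (nat \<Rightarrow> real)
   \<Rightarrow> (nat \<Rightarrow> real) \<Rightarrow> (nat \<Rightarrow> real) \<Rightarrow> (nat \<Rightarrow> real) \<Rightarrow> (nat \<Rightarrow> real) \<Rightarrow> real" where
  "Lam m lam p J a b c d k r = lam * (\<Sum>i<m. p i * U J a b c d k r i)"

definition Dq :: "nat \<Rightarrow> real \<Rightarrow> real \<Rightarrow> real" where
  "Dq L lam \<Lambda> = \<Lambda>\<^sup>2 / (lam * real L * (real L - \<Lambda>))"

definition Ds :: "(nat \<Rightarrow> real) \<Rightarrow> (nat \<Rightarrow> real) \<Rightarrow> (nat \<Rightarrow> real) \<Rightarrow> (nat \<Rightarrow> real)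
   \<Rightarrow> (nat \<Rightarrow> real) \<Rightarrow> (nat \<Rightarrow> real) \<Rightarrow> (nat \<Rightarrow> real) \<Rightarrow> nat \<Rightarrow> real" where
  "Ds J a b c d k r i = a i + b i * J i / k i + (c i + d i * J i / k i) * ln (r i / (r i - 1))"

definition objective :: "nat \<Rightarrow> nat \<Rightarrow> real \<Rightarrow> (nat \<Rightarrow> real) \<Rightarrow> (nat \<Rightarrow> real) \<Rightarrow> (nat \<Rightarrow> real)
   \<Rightarrow> (nat \<Rightarrow> real) \<Rightarrow> (nat \<Rightarrow> real) \<Rightarrow> (nat \<Rightarrow> real) \<Rightarrow> (nat \<Rightarrow> real) \<Rightarrow> (nat \<Rightarrow> real) \<Rightarrow> real" where
  "objective m L lam p J a b c d k r =
     Dq L lam (Lam m lam p J a b c d k r) + (\<Sum>i<m. p i * Ds J a b c d k r i)"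

text \<open>Feasible set. The constraint r i \<ge> 1 is taken as r i > 1: at r i = 1 the
  service delay is +\<infinity> (ln(r/(r-1)) diverges), so such points are never optimal.\<close>
definition feasible :: "nat \<Rightarrow> nat \<Rightarrow> real \<Rightarrow> (nat \<Rightarrow> real) \<Rightarrow> (nat \<Rightarrow> real) \<Rightarrow> (nat \<Rightarrow> real)
   \<Rightarrow> (nat \<Rightarrow> real) \<Rightarrow> (nat \<Rightarrow> real) \<Rightarrow> (nat \<Rightarrow> real) \<Rightarrow> (nat \<Rightarrow> real) \<Rightarrow> (nat \<Rightarrow> real) \<Rightarrow> bool" where
  "feasible m L lam p J a b c d k r \<longleftrightarrow>
     (\<forall>i<m. k i > 0 \<and> r i > 1) \<and> Lam m lam p J a b c d k r < real L"

definition optimal :: "nat \<Rightarrow> nat \<Rightarrow> real \<Rightarrow> (nat \<Rightarrow> real) \<Rightarrow> (nat \<Rightarrow> real) \<Rightarrow> (nat \<Rightarrow> real)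
   \<Rightarrow> (nat \<Rightarrow> real) \<Rightarrow> (nat \<Rightarrow> real) \<Rightarrow> (nat \<Rightarrow> real) \<Rightarrow> (nat \<Rightarrow> real) \<Rightarrow> (nat \<Rightarrow> real) \<Rightarrow> bool" where
  "optimal m L lam p J a b c d k r \<longleftrightarrow>
     feasible m L lam p J a b c d k r \<and>
     (\<forall>k' r'. feasible m L lam p J a b c d k' r' \<longrightarrow>
        objective m L lam p J a b c d k r \<le> objective m L lam p J a b c d k' r')"

definition strictly_decreasing_pos :: "(real \<Rightarrow> real) \<Rightarrow> bool" where
  "strictly_decreasing_pos F \<longleftrightarrow> (\<forall>x y. 0 < x \<longrightarrow> x < y \<longrightarrow> F y < F x)"

end

theory Submission
  imports Defs
begin


definition ww :: "real \<Rightarrow> real" where "ww r = r*(r-1)"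
definition ss :: "real \<Rightarrow> real" where "ss r = ln (r/(r-1))"
definition phi :: "real\<Rightarrow>real\<Rightarrow>real\<Rightarrow>real\<Rightarrow>real\<Rightarrow>real\<Rightarrow>real" where
  "phi J a b c d r = ww r * (b + d * ss r) / (a*r+c)"
definition ell :: "real\<Rightarrow>real\<Rightarrow>real\<Rightarrow>real\<Rightarrow>real\<Rightarrow>real\<Rightarrow>real" where
  "ell J a b c d x = x*(c*x+d*J)/(J*(a*x+b*J))"
definition Kinv :: "real\<Rightarrow>real\<Rightarrow>real\<Rightarrow>real\<Rightarrow>real\<Rightarrow>real\<Rightarrow>real" where
  "Kinv J a b c d y = ((y*J*a - d*J) + sqrt((y*J*a - d*J)^2 + 4*c*y*J^2*b))/(2*c)"
definition hh :: "real\<Rightarrow>real\<Rightarrow>real\<Rightarrow>real\<Rightarrow>real\<Rightarrow>real\<Rightarrow>real" where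
  "hh J a b c d x = (c*x+d*J)/(x*(a*x+b*J))"
definition Kr :: "real\<Rightarrow>real\<Rightarrow>real\<Rightarrow>real\<Rightarrow>real\<Rightarrow>real\<Rightarrow>real" where
  "Kr J a b c d r = Kinv J a b c d (phi J a b c d r)"
definition Tr :: "real\<Rightarrow>real\<Rightarrow>real\<Rightarrow>real\<Rightarrow>real\<Rightarrow>real\<Rightarrow>real" where
  "Tr J a b c d r = hh J a b c d (Kr J a b c d r) / ww r"

lemma ell_mono:
  assumes p: "J>0" "a>0" "b>0" "c>0" "d>0" and x: "0<x" "x<y"
  shows "ell J a b c d x < ell J a b c d y"
proof -
  have d1: "x*(c*x+d*J)*(a*y+b*J) < y*(c*y+d*J)*(a*x+b*J)"
  proof -
    have "y*(c*y+d*J)*(a*x+b*J) - x*(c*x+d*J)*(a*y+b*J)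
       = a*c*x*y*(y-x) + b*c*J*(y*y-x*x) + b*d*J*J*(y-x)" by (simp add: algebra_simps)
    moreover have "a*c*x*y*(y-x) > 0" using p x by simp
    moreover have "b*c*J*(y*y-x*x) > 0" using p x by (simp add: mult_strict_mono)
    moreover have "b*d*J*J*(y-x) > 0" using p x by simp
    ultimately show ?thesis by linarith
  qed
  have "a*x+b*J > 0" "a*y+b*J>0" using p x by (auto intro: add_pos_pos)
  then show ?thesis using d1 p unfolding ell_def by (simp add: divide_simps mult_ac)
qed

lemma ell_pos: "J>0 \<Longrightarrow> a>0 \<Longrightarrow> b>0 \<Longrightarrow> c>0 \<Longrightarrow> d>0 \<Longrightarrow> x > 0 \<Longrightarrow> ell J a b c d x > 0"
  unfolding ell_def by (intro divide_pos_pos mult_pos_pos add_pos_pos) auto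

lemma Kinv_pos:
  assumes p: "J>0" "a>0" "b>0" "c>0" "d>0" and y: "y>0"
  shows "Kinv J a b c d y > 0"
proof -
  let ?B = "y*J*a - d*J"
  have "sqrt (?B^2) < sqrt(?B^2 + 4*c*y*J^2*b)" using p y by (intro real_sqrt_less_mono) simp
  then have "\<bar>?B\<bar> < sqrt(?B^2 + 4*c*y*J^2*b)" by simp
  then have "?B + sqrt(?B^2 + 4*c*y*J^2*b) > 0" by linarith
  then show ?thesis unfolding Kinv_def using p by simp
qed

lemma ell_Kinv:
  assumes p: "J>0" "a>0" "b>0" "c>0" "d>0" and y: "y>0"
  shows "ell J a b c d (Kinv J a b c d y) = y"
proof -
  let ?B = "y*J*a - d*J"
  define S where "S = sqrt(?B^2 + 4*c*y*J^2*b)"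
  have S2: "S^2 = ?B^2 + 4*c*y*J^2*b" unfolding S_def using p y by (simp add: add_nonneg_nonneg)
  define x where "x = Kinv J a b c d y"
  have xp: "x > 0" using Kinv_pos[OF p y] x_def by simp
  have xd: "x = (?B + S)/(2*c)" unfolding x_def Kinv_def S_def by simp
  have q: "c*x*x + (d*J - y*J*a)*x - y*J*J*b = 0"
  proof -
    have "2*c*x = ?B + S" using xd p by simp
    then have "S = 2*c*x - ?B" by simp
    then have "(2*c*x - ?B)^2 = ?B^2 + 4*c*y*J^2*b" using S2 by simp
    then have "4*c*(c*x*x + (d*J - y*J*a)*x - y*J*J*b) = 0" by (simp add: power2_eq_square algebra_simps)
    then show ?thesis using p by simp
  qed
  have "a*x+b*J > 0" using p xp by (auto intro: add_pos_pos)
  then have "x*(c*x+d*J) = y*(J*(a*x+b*J))" using q by (simp add: algebra_simps)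
  then show ?thesis using p \<open>a*x+b*J > 0\<close> unfolding ell_def x_def[symmetric] by (simp add: divide_simps)
qed

lemma Kinv_ell:
  assumes p: "J>0" "a>0" "b>0" "c>0" "d>0" and x: "x>0"
  shows "Kinv J a b c d (ell J a b c d x) = x"
proof -
  let ?z = "Kinv J a b c d (ell J a b c d x)"
  have e: "ell J a b c d ?z = ell J a b c d x" using ell_Kinv[OF p ell_pos[OF p x]] .
  have zp: "?z > 0" using Kinv_pos[OF p ell_pos[OF p x]] .
  show ?thesis
  proof (rule ccontr)
    assume "?z \<noteq> x"
    then consider "?z < x" | "x < ?z" by linarith
    then show False using ell_mono[OF p zp] ell_mono[OF p x] e by (cases; force)
  qed
qed

lemma Kinv_mono:
  assumes p: "J>0" "a>0" "b>0" "c>0" "d>0" and y: "0<y1" "y1<y2"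
  shows "Kinv J a b c d y1 < Kinv J a b c d y2"
proof (rule ccontr)
  assume "\<not> ?thesis"
  then have h: "Kinv J a b c d y2 \<le> Kinv J a b c d y1" by simp
  have y2: "y2 > 0" using y by simp
  have "ell J a b c d (Kinv J a b c d y2) \<le> ell J a b c d (Kinv J a b c d y1)"
  proof (cases "Kinv J a b c d y2 = Kinv J a b c d y1")
    case False
    then have "Kinv J a b c d y2 < Kinv J a b c d y1" using h by simp
    from ell_mono[OF p Kinv_pos[OF p y2] this] show ?thesis by simp
  qed simp
  then show False using ell_Kinv[OF p y(1)] ell_Kinv[OF p y2] y by simp
qed

lemma hh_mono:
  assumes p: "J>0" "a>0" "b>0" "c>0" "d>0" and x: "0<x" "x<y"
  shows "hh J a b c d y < hh J a b c d x"
proof -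
  have d1: "(c*y+d*J)*(x*(a*x+b*J)) < (c*x+d*J)*(y*(a*y+b*J))"
  proof -
    have "(c*x+d*J)*(y*(a*y+b*J)) - (c*y+d*J)*(x*(a*x+b*J))
       = a*c*x*y*(y-x) + a*d*J*(y*y-x*x) + b*d*J*J*(y-x)" by (simp add: algebra_simps)
    moreover have "a*c*x*y*(y-x) > 0" using p x by simp
    moreover have "a*d*J*(y*y-x*x) > 0" using p x by (simp add: mult_strict_mono)
    moreover have "b*d*J*J*(y-x) > 0" using p x by simp
    ultimately show ?thesis by linarith
  qed
  have "a*x+b*J > 0" "a*y+b*J>0" using p x by (auto intro: add_pos_pos)
  then show ?thesis using d1 p x unfolding hh_def by (simp add: divide_simps)
qed

lemma hh_pos: "J>0 \<Longrightarrow> a>0 \<Longrightarrow> b>0 \<Longrightarrow> c>0 \<Longrightarrow> d>0 \<Longrightarrow> x > 0 \<Longrightarrow> hh J a b c d x > 0"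
  unfolding hh_def by (intro divide_pos_pos mult_pos_pos add_pos_pos) auto

lemma ss_pos: "r > 1 \<Longrightarrow> ss r > 0"
  unfolding ss_def by (simp add: divide_simps)

lemma ss_ge: "r > 1 \<Longrightarrow> ss r \<ge> 1/r"
proof -
  assume r: "r>1"
  have "ln ((r-1)/r) \<le> (r-1)/r - 1" using r by (intro ln_le_minus_one) simp
  moreover have "ln ((r-1)/r) = - ss r" unfolding ss_def using r
    by (simp add: ln_div)
  moreover have "(r-1)/r - 1 = -1/r" using r by (simp add: field_simps)
  ultimately show ?thesis by simp
qed



lemma phi_pos:
  assumes p: "J>0" "a>0" "b>0" "c>0" "d>0" and r: "r>1"
  shows "phi J a b c d r > 0"
  unfolding phi_def ww_def using p r ss_pos[OF r]
  by (intro divide_pos_pos mult_pos_pos add_pos_pos) auto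

lemma phi_deriv:
  assumes p: "J>0" "a>0" "b>0" "c>0" "d>0" and r: "r>1"
  shows "(phi J a b c d has_real_derivative
     ((b + d*ss r)*(a*r*r + c*(2*r-1)) - d*(a*r+c)) / (a*r+c)^2) (at r)"
proof -
  have pos: "a*r+c > 0" using p r by (auto intro!: add_pos_pos)
  have nz: "a*r+c \<noteq> 0" "r - 1 \<noteq> 0" "r \<noteq> 0" "r/(r-1) > 0" using p r pos by auto
  have nz2: "r + r*(r*r) - r*(r*2) \<noteq> 0"
  proof -
    have "r + r*(r*r) - r*(r*2) = r*(r-1)^2" by (simp add: power2_eq_square algebra_simps)
    then show ?thesis using nz by simp
  qed
  have "((\<lambda>r. r*(r-1)*(b + d*ln (r/(r-1)))/(a*r+c)) has_real_derivative
     (((2*r-1)*(b+d*ln (r/(r-1))) - d)*(a*r+c) - r*(r-1)*(b+d*ln (r/(r-1)))*a)/(a*r+c)^2) (at r)"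
    apply (rule derivative_eq_intros refl | (use nz in \<open>simp; fail\<close>))+
    using nz apply (simp add: field_simps power2_eq_square)
    using nz2 apply (simp add: field_simps)
    done
  moreover have "(((2*r-1)*(b+d*ln (r/(r-1))) - d)*(a*r+c) - r*(r-1)*(b+d*ln (r/(r-1)))*a)
     = ((b + d*ss r)*(a*r*r + c*(2*r-1)) - d*(a*r+c))" unfolding ss_def by (simp add: algebra_simps)
  ultimately show ?thesis unfolding phi_def ww_def ss_def by (simp add: mult.assoc)
qed

lemma phi_deriv_pos:
  assumes p: "J>0" "a>0" "b>0" "c>0" "d>0" and r: "r>1"
  shows "((b + d*ss r)*(a*r*r + c*(2*r-1)) - d*(a*r+c)) / (a*r+c)^2 > 0"
proof -
  have X: "a*r*r + c*(2*r-1) > 0" using p r by (intro add_pos_pos) auto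
  have sg: "ss r \<ge> 1/r" using ss_ge[OF r] .
  have "ss r * (a*r*r + c*(2*r-1)) \<ge> (1/r) * (a*r*r + c*(2*r-1))"
    using sg X by (intro mult_right_mono) auto
  moreover have "(1/r) * (a*r*r + c*(2*r-1)) = a*r + 2*c - c/r" using r by (simp add: field_simps)
  moreover have "c/r < c" using p r by (simp add: divide_simps)
  ultimately have "ss r * (a*r*r + c*(2*r-1)) - (a*r+c) > 0" by linarith
  then have "d*(ss r * (a*r*r + c*(2*r-1)) - (a*r+c)) > 0" using p by simp
  moreover have "b*(a*r*r + c*(2*r-1)) > 0" using p X by simp
  ultimately have "(b + d*ss r)*(a*r*r + c*(2*r-1)) - d*(a*r+c) > 0" by (simp add: algebra_simps)
  moreover have "a*r+c > 0" using p r by (auto intro!: add_pos_pos)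
  ultimately show ?thesis by simp
qed

lemma phi_mono:
  assumes p: "J>0" "a>0" "b>0" "c>0" "d>0" and r: "1<r1" "r1<r2"
  shows "phi J a b c d r1 < phi J a b c d r2"
  using r(2)
proof (rule DERIV_pos_imp_increasing)
  fix x assume "r1 \<le> x" "x \<le> r2"
  then have x: "x > 1" using r by simp
  show "\<exists>y. DERIV (phi J a b c d) x :> y \<and> y > 0"
    using phi_deriv[OF p x] phi_deriv_pos[OF p x] by blast
qed



lemma Kr_pos: "J>0 \<Longrightarrow> a>0 \<Longrightarrow> b>0 \<Longrightarrow> c>0 \<Longrightarrow> d>0 \<Longrightarrow> r>1 \<Longrightarrow> Kr J a b c d r > 0"
  unfolding Kr_def by (intro Kinv_pos phi_pos)

lemma Kr_mono:
  assumes p: "J>0" "a>0" "b>0" "c>0" "d>0" and r: "1<r1" "r1<r2"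
  shows "Kr J a b c d r1 < Kr J a b c d r2"
  unfolding Kr_def using phi_pos[OF p r(1)] phi_mono[OF p r] by (intro Kinv_mono[OF p]) auto

lemma ww_pos: "r > 1 \<Longrightarrow> ww r > 0" unfolding ww_def by simp

lemma ww_mono: "1 < r1 \<Longrightarrow> r1 < r2 \<Longrightarrow> ww r1 < ww r2"
  unfolding ww_def by (intro mult_strict_mono) auto

lemma Tr_pos: "J>0 \<Longrightarrow> a>0 \<Longrightarrow> b>0 \<Longrightarrow> c>0 \<Longrightarrow> d>0 \<Longrightarrow> r>1 \<Longrightarrow> Tr J a b c d r > 0"
  unfolding Tr_def by (intro divide_pos_pos hh_pos Kr_pos ww_pos)

lemma Tr_mono:
  assumes p: "J>0" "a>0" "b>0" "c>0" "d>0" and r: "1<r1" "r1<r2"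
  shows "Tr J a b c d r2 < Tr J a b c d r1"
proof -
  have r2: "r2 > 1" using r by simp
  have h: "hh J a b c d (Kr J a b c d r2) < hh J a b c d (Kr J a b c d r1)"
    using hh_mono[OF p Kr_pos[OF p r(1)] Kr_mono[OF p r]] .
  have "hh J a b c d (Kr J a b c d r2) / ww r2 < hh J a b c d (Kr J a b c d r1) / ww r2"
    using h ww_pos[OF r2] by (simp add: divide_strict_right_mono)
  also have "\<dots> < hh J a b c d (Kr J a b c d r1) / ww r1"
    using ww_mono[OF r] ww_pos[OF r(1)] hh_pos[OF p Kr_pos[OF p r(1)]]
    by (intro divide_strict_left_mono) auto
  finally show ?thesis unfolding Tr_def .
qed

lemma Tr_cont:
  assumes p: "J>0" "a>0" "b>0" "c>0" "d>0" and x: "1 < x"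
  shows "continuous_on {x..y} (Tr J a b c d)"
proof -
  have c1: "continuous_on {x..y} (phi J a b c d)"
    unfolding phi_def ww_def ss_def using x p
  proof (intro continuous_intros ballI)
    fix r assume "r \<in> {x..y}"
    then have "r > 0" using x by simp
    then show "a*r+c \<noteq> 0" using p by (metis add_pos_pos less_irrefl mult_pos_pos)
  qed auto
  have c2: "continuous_on UNIV (Kinv J a b c d)"
    unfolding Kinv_def using p by (intro continuous_intros) auto
  have ck: "continuous_on {x..y} (Kr J a b c d)"
    unfolding Kr_def using continuous_on_compose2[OF c2 c1] by auto
  have c3: "continuous_on {0<..} (hh J a b c d)"
    unfolding hh_def using p
  proof (intro continuous_intros ballI)
    fix r :: real assume "r \<in> {0<..}"
    then have "r > 0" by simp
    then show "r*(a*r+b*J) \<noteq> 0" using p by (metis add_pos_pos less_irrefl mult_pos_pos)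
  qed
  have "continuous_on {x..y} (\<lambda>r. hh J a b c d (Kr J a b c d r))"
    using continuous_on_compose2[OF c3 ck] Kr_pos[OF p] x by force
  moreover have "continuous_on {x..y} ww" unfolding ww_def by (intro continuous_intros)
  moreover have "\<forall>r\<in>{x..y}. ww r \<noteq> 0" using x ww_pos by (metis atLeastAtMost_iff less_le_trans less_irrefl)
  ultimately show ?thesis unfolding Tr_def
    by (intro continuous_on_divide) auto
qed

lemma Tr_surj:
  assumes p: "J>0" "a>0" "b>0" "c>0" "d>0" and y: "y > 0"
  shows "\<exists>r>1. Tr J a b c d r = y"
proof -
  define H where "H = hh J a b c d (Kr J a b c d 2)"
  have Hp: "H > 0" unfolding H_def using p by (intro hh_pos Kr_pos) auto
  define r1 where "r1 = 1 + min (1/2) (H/(4*y))"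
  define r2 where "r2 = 2 + H/y"
  have r1: "1 < r1" "r1 \<le> 3/2" using Hp y unfolding r1_def by auto
  have r2: "2 < r2" unfolding r2_def using Hp y by simp
  have T1: "Tr J a b c d r1 > y"
  proof -
    have "Kr J a b c d r1 < Kr J a b c d 2" using Kr_mono[OF p r1(1)] r1 by simp
    then have hge: "hh J a b c d (Kr J a b c d r1) > H" unfolding H_def
      using hh_mono[OF p Kr_pos[OF p r1(1)]] by simp
    have "ww r1 \<le> 2*(r1-1)" unfolding ww_def using r1 by (intro mult_right_mono) auto
    also have "\<dots> \<le> H/(2*y)" unfolding r1_def by simp
    finally have wle: "ww r1 \<le> H/(2*y)" .
    have "H / (H/(2*y)) \<le> H / ww r1" using wle ww_pos[OF r1(1)] Hp
      by (intro divide_left_mono) (auto simp: y)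
    moreover have "H / (H/(2*y)) = 2*y" using Hp y by simp
    moreover have "H / ww r1 < hh J a b c d (Kr J a b c d r1) / ww r1"
      using hge ww_pos[OF r1(1)] by (simp add: divide_strict_right_mono)
    ultimately show ?thesis unfolding Tr_def using y by linarith
  qed
  have T2: "Tr J a b c d r2 < y"
  proof -
    have "Kr J a b c d 2 < Kr J a b c d r2" using Kr_mono[OF p _ r2] by simp
    then have hle: "hh J a b c d (Kr J a b c d r2) < H" unfolding H_def
      using hh_mono[OF p Kr_pos[OF p]] by simp
    have "ww r2 \<ge> r2 - 1" unfolding ww_def using r2 by simp
    then have wge: "ww r2 > H/y" unfolding r2_def by simp
    have "hh J a b c d (Kr J a b c d r2) / ww r2 < H / ww r2"
      using hle ww_pos r2 by (simp add: divide_strict_right_mono)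
    also have "\<dots> < H / (H/y)" using wge Hp y ww_pos[of r2] r2 by (intro divide_strict_left_mono) auto
    also have "\<dots> = y" using Hp y by simp
    finally show ?thesis unfolding Tr_def .
  qed
  have "r1 \<le> r2" using r1 r2 by simp
  from IVT2'[of "Tr J a b c d" r2 y r1, OF _ _ this Tr_cont[OF p r1(1)]] T1 T2
  obtain r where "r1 \<le> r" "r \<le> r2" "Tr J a b c d r = y" by auto
  then show ?thesis using r1 by (intro exI[of _ r]) auto
qed



definition tL :: "real \<Rightarrow> real \<Rightarrow> real" where "tL Lr x = Lr/(Lr-x)^2 - 1/Lr"
definition Qf :: "real \<Rightarrow> real \<Rightarrow> real" where "Qf Lr x = x^2/(Lr*(Lr-x))"
definition Lq :: "real \<Rightarrow> real \<Rightarrow> real" where "Lq Lr q = Lr*(sqrt(q^2+4*q) - q)/2"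
definition tau :: "real \<Rightarrow> real \<Rightarrow> real" where "tau Lr q = tL Lr (Lq Lr q)"
definition RF :: "real \<Rightarrow> real \<Rightarrow> real \<Rightarrow> real \<Rightarrow> real \<Rightarrow> real \<Rightarrow> real \<Rightarrow> real" where
  "RF Lr J a b c d q = (THE r. 1 < r \<and> Tr J a b c d r = tau Lr q)"
definition KF :: "real \<Rightarrow> real \<Rightarrow> real \<Rightarrow> real \<Rightarrow> real \<Rightarrow> real \<Rightarrow> real \<Rightarrow> real" where
  "KF Lr J a b c d q = Kr J a b c d (RF Lr J a b c d q)"
definition NF :: "real \<Rightarrow> real \<Rightarrow> real \<Rightarrow> real \<Rightarrow> real \<Rightarrow> real \<Rightarrow> real \<Rightarrow> real" where
  "NF Lr J a b c d q = KF Lr J a b c d q * RF Lr J a b c d q"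

lemma Lq_props:
  assumes L: "Lr > 0" and q: "q > 0"
  shows "0 < Lq Lr q" "Lq Lr q < Lr" "Qf Lr (Lq Lr q) = q"
proof -
  define S where "S = sqrt(q^2+4*q)"
  have nn: "0 \<le> q^2+4*q" using q by (intro add_nonneg_nonneg) auto
  then have S2: "S^2 = q^2+4*q" unfolding S_def by (rule real_sqrt_pow2)
  have S0: "S \<ge> 0" unfolding S_def using nn by simp
  have "sqrt (q^2) < S" unfolding S_def using q by (intro real_sqrt_less_mono) simp
  then have Sq: "q < S" using q by simp
  have "S < sqrt ((q+2)^2)" unfolding S_def using q by (intro real_sqrt_less_mono) (simp add: power2_eq_square algebra_simps)
  then have Sq2: "S < q + 2" using q by simp
  have Ld: "Lq Lr q = Lr*(S-q)/2" unfolding Lq_def S_def by simp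
  show "0 < Lq Lr q" unfolding Ld using L Sq by simp
  show lt: "Lq Lr q < Lr" unfolding Ld using L Sq2 by simp
  have "(Lr*(S-q)/2)^2 = q*Lr*(Lr - Lr*(S-q)/2)"
  proof -
    have "(Lr*(S-q)/2)^2 = Lr^2*(S^2 - 2*q*S + q^2)/4" by (simp add: power2_eq_square algebra_simps)
    also have "\<dots> = Lr^2*(2*q^2 + 4*q - 2*q*S)/4" using S2 by simp
    also have "\<dots> = q*Lr*(Lr - Lr*(S-q)/2)" by (simp add: power2_eq_square field_simps)
    finally show ?thesis .
  qed
  then show "Qf Lr (Lq Lr q) = q" unfolding Qf_def Ld using L lt Ld
    by (simp add: divide_simps)
qed

lemma Qf_mono:
  assumes "Lr > 0" "0 \<le> x" "x < y" "y < Lr"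
  shows "Qf Lr x < Qf Lr y"
proof -
  have "x^2 < y^2" using assms by (simp add: power_strict_mono)
  moreover have "Lr*(Lr-y) < Lr*(Lr-x)" using assms by simp
  moreover have "Lr*(Lr-y) > 0" using assms by simp
  ultimately have "x^2/(Lr*(Lr-x)) < y^2/(Lr*(Lr-y))"
    using assms by (intro frac_less) auto
  then show ?thesis unfolding Qf_def .
qed

lemma Qf_pos: "Lr > 0 \<Longrightarrow> 0 < x \<Longrightarrow> x < Lr \<Longrightarrow> Qf Lr x > 0"
  unfolding Qf_def by simp

lemma Lq_Qf:
  assumes L: "Lr > 0" and x: "0 < x" "x < Lr"
  shows "Lq Lr (Qf Lr x) = x"
proof -
  have qp: "Qf Lr x > 0" using Qf_pos L x .
  note P = Lq_props[OF L qp]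
  show ?thesis
  proof (rule ccontr)
    assume "Lq Lr (Qf Lr x) \<noteq> x"
    then consider "Lq Lr (Qf Lr x) < x" | "x < Lq Lr (Qf Lr x)" by linarith
    then show False
    proof cases
      case 1 then show ?thesis using Qf_mono[OF L _ 1] P x by simp
    next
      case 2 then show ?thesis using Qf_mono[OF L _ 2] P x by simp
    qed
  qed
qed

lemma Lq_mono:
  assumes L: "Lr > 0" and q: "0 < q1" "q1 < q2"
  shows "Lq Lr q1 < Lq Lr q2"
proof (rule ccontr)
  assume "\<not> ?thesis"
  then have h: "Lq Lr q2 \<le> Lq Lr q1" by simp
  have q2: "q2 > 0" using q by simp
  note P1 = Lq_props[OF L q(1)] and P2 = Lq_props[OF L q2]
  have "Qf Lr (Lq Lr q2) \<le> Qf Lr (Lq Lr q1)"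
  proof (cases "Lq Lr q2 = Lq Lr q1")
    case False
    then show ?thesis using Qf_mono[OF L, of "Lq Lr q2" "Lq Lr q1"] h P1 P2 by simp
  qed simp
  then show False using P1 P2 q by simp
qed

lemma tL_mono:
  assumes "Lr > 0" "0 \<le> x" "x < y" "y < Lr"
  shows "tL Lr x < tL Lr y"
proof -
  have "(Lr-y)^2 < (Lr-x)^2" using assms by (intro power_strict_mono) auto
  then have "Lr/(Lr-x)^2 < Lr/(Lr-y)^2" using assms by (intro divide_strict_left_mono) auto
  then show ?thesis unfolding tL_def by simp
qed

lemma tL_pos:
  assumes "Lr > 0" "0 < x" "x < Lr"
  shows "tL Lr x > 0"
proof -
  have "tL Lr 0 = 0" unfolding tL_def using assms by (simp add: power2_eq_square)
  then show ?thesis using tL_mono[of Lr 0 x] assms by simp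
qed

lemma tau_pos: "Lr > 0 \<Longrightarrow> q > 0 \<Longrightarrow> tau Lr q > 0"
  unfolding tau_def using Lq_props tL_pos by blast

lemma tau_mono: "Lr > 0 \<Longrightarrow> 0 < q1 \<Longrightarrow> q1 < q2 \<Longrightarrow> tau Lr q1 < tau Lr q2"
  unfolding tau_def
  by (rule tL_mono) (use Lq_props[of Lr q1] Lq_props[of Lr q2] Lq_mono[of Lr q1 q2] in auto)

lemma Tr_inj:
  assumes p: "J>0" "a>0" "b>0" "c>0" "d>0" and r: "1 < r1" "1 < r2" "Tr J a b c d r1 = Tr J a b c d r2"
  shows "r1 = r2"
proof (rule ccontr)
  assume "r1 \<noteq> r2"
  then consider "r1 < r2" | "r2 < r1" by linarith
  then show False using Tr_mono[OF p] r by (cases) force+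
qed

lemma RF_props:
  assumes L: "Lr > 0" and p: "J>0" "a>0" "b>0" "c>0" "d>0" and q: "q > 0"
  shows "1 < RF Lr J a b c d q \<and> Tr J a b c d (RF Lr J a b c d q) = tau Lr q"
proof -
  obtain r where r: "r > 1" "Tr J a b c d r = tau Lr q" using Tr_surj[OF p tau_pos[OF L q]] by blast
  show ?thesis unfolding RF_def
    by (rule theI[of _ r]) (use r Tr_inj[OF p] in auto)
qed

lemma RF_eq:
  assumes L: "Lr > 0" and p: "J>0" "a>0" "b>0" "c>0" "d>0" and q: "q > 0"
    and r: "r > 1" "Tr J a b c d r = tau Lr q"
  shows "RF Lr J a b c d q = r"
  using RF_props[OF L p q] r Tr_inj[OF p] by metis

lemma RF_dec:
  assumes L: "Lr > 0" and p: "J>0" "a>0" "b>0" "c>0" "d>0"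
  shows "strictly_decreasing_pos (RF Lr J a b c d)"
  unfolding strictly_decreasing_pos_def
proof (intro allI impI)
  fix x y :: real assume xy: "0 < x" "x < y"
  note P1 = RF_props[OF L p xy(1)] and P2 = RF_props[OF L p, of y]
  have t: "tau Lr x < tau Lr y" using tau_mono[OF L xy] .
  show "RF Lr J a b c d y < RF Lr J a b c d x"
  proof (rule ccontr)
    assume "\<not> ?thesis"
    then have h: "RF Lr J a b c d x \<le> RF Lr J a b c d y" by simp
    have "Tr J a b c d (RF Lr J a b c d y) \<le> Tr J a b c d (RF Lr J a b c d x)"
    proof (cases "RF Lr J a b c d x = RF Lr J a b c d y")
      case False
      then show ?thesis using Tr_mono[OF p, of "RF Lr J a b c d x" "RF Lr J a b c d y"] h P1 by simp
    qed simp
    then show False using P1 P2 xy t by simp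
  qed
qed

lemma KF_dec:
  assumes L: "Lr > 0" and p: "J>0" "a>0" "b>0" "c>0" "d>0"
  shows "strictly_decreasing_pos (KF Lr J a b c d)"
  unfolding strictly_decreasing_pos_def KF_def
proof (intro allI impI)
  fix x y :: real assume xy: "0 < x" "x < y"
  have "RF Lr J a b c d y < RF Lr J a b c d x" using RF_dec[OF L p] xy
    unfolding strictly_decreasing_pos_def by blast
  moreover have "1 < RF Lr J a b c d y" using RF_props[OF L p, of y] xy by simp
  ultimately show "Kr J a b c d (RF Lr J a b c d y) < Kr J a b c d (RF Lr J a b c d x)"
    using Kr_mono[OF p] by blast
qed

lemma NF_dec:
  assumes L: "Lr > 0" and p: "J>0" "a>0" "b>0" "c>0" "d>0"
  shows "strictly_decreasing_pos (NF Lr J a b c d)"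
  unfolding strictly_decreasing_pos_def NF_def
proof (intro allI impI)
  fix x y :: real assume xy: "0 < x" "x < y"
  have r: "RF Lr J a b c d y < RF Lr J a b c d x" using RF_dec[OF L p] xy
    unfolding strictly_decreasing_pos_def by blast
  have k: "KF Lr J a b c d y < KF Lr J a b c d x" using KF_dec[OF L p] xy
    unfolding strictly_decreasing_pos_def by blast
  have r1: "1 < RF Lr J a b c d y" using RF_props[OF L p, of y] xy by simp
  have k1: "0 < KF Lr J a b c d y" unfolding KF_def using Kr_pos[OF p r1] .
  show "KF Lr J a b c d y * RF Lr J a b c d y < KF Lr J a b c d x * RF Lr J a b c d x"
    using r k r1 k1 by (intro mult_strict_mono) auto
qed



lemma class_char:
  assumes p: "J>0" "a>0" "b>0" "c>0" "d>0" and k: "k > 0" and r: "r > 1"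
    and E1: "(a*r+c)*t = J*(b+d*ss r)/k^2"
    and E2: "(a*k+b*J)*t = (c + d*J/k)/(r*(r-1))"
  shows "Kr J a b c d r = k \<and> Tr J a b c d r = t"
proof -
  have akb: "a*k+b*J > 0" using p k by (intro add_pos_pos) auto
  have arc: "a*r+c > 0" using p r by (intro add_pos_pos) auto
  have w: "ww r > 0" using ww_pos[OF r] .
  have rr: "r*(r-1) > 0" using r by simp
  have tdef: "t = hh J a b c d k / ww r"
  proof -
    have "t = ((a*k+b*J)*t) / (a*k+b*J)" using akb by simp
    also have "\<dots> = ((c + d*J/k)/(r*(r-1))) / (a*k+b*J)" using E2 by simp
    finally have "t = ((c + d*J/k)/(r*(r-1))) / (a*k+b*J)" .
    also have "\<dots> = (c*k+d*J)/(k*(a*k+b*J)) / (r*(r-1))" using k akb rr by (simp add: divide_simps)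
    finally show ?thesis unfolding hh_def ww_def .
  qed
  have "ell J a b c d k = phi J a b c d r"
  proof -
    have "(a*r+c) * (hh J a b c d k / ww r) = J*(b+d*ss r)/k^2" using E1 tdef by simp
    moreover have "(a*r+c) * (hh J a b c d k / ww r) = ((a*r+c)*(c*k+d*J))/(k*(a*k+b*J)*ww r)"
      unfolding hh_def by simp
    ultimately have "((a*r+c)*(c*k+d*J))/(k*(a*k+b*J)*ww r) = J*(b+d*ss r)/k^2" by simp
    then have "((a*r+c)*(c*k+d*J)) * k^2 = J*(b+d*ss r) * (k*(a*k+b*J)*ww r)"
      using k akb w by (simp add: frac_eq_eq)
    then have "(((a*r+c)*(c*k+d*J)) * k) * k = (J*(b+d*ss r) * ((a*k+b*J)*ww r)) * k"
      by (simp add: power2_eq_square ac_simps)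
    then have X: "((a*r+c)*(c*k+d*J)) * k = J*(b+d*ss r) * ((a*k+b*J)*ww r)"
      using k by simp
    have "k*(c*k+d*J)*(a*r+c) = ww r * (b + d * ss r)*(J*(a*k+b*J))"
      using X by (simp only: ac_simps)
    then show ?thesis unfolding ell_def phi_def using akb arc k p
      by (simp add: frac_eq_eq)
  qed
  then have "Kr J a b c d r = k" unfolding Kr_def using Kinv_ell[OF p k] by simp
  moreover then have "Tr J a b c d r = t" unfolding Tr_def using tdef by simp
  ultimately show ?thesis by simp
qed

lemma sum_upd:
  fixes F G :: "nat \<Rightarrow> real"
  assumes "i < m" "\<And>j. j \<noteq> i \<Longrightarrow> F j = G j"
  shows "(\<Sum>j<m. F j) = (\<Sum>j<m. G j) + (F i - G i)"
proof -
  have "(\<Sum>j<m. F j) = F i + (\<Sum>j\<in>{..<m} - {i}. F j)" using assms(1) by (simp add: sum.remove)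
  moreover have "(\<Sum>j<m. G j) = G i + (\<Sum>j\<in>{..<m} - {i}. G j)" using assms(1) by (simp add: sum.remove)
  moreover have "(\<Sum>j\<in>{..<m} - {i}. F j) = (\<Sum>j\<in>{..<m} - {i}. G j)" using assms(2) by (intro sum.cong) auto
  ultimately show ?thesis by simp
qed

lemma dq_deriv:
  fixes A B L al x0 :: real
  assumes "B \<noteq> 0" "L \<noteq> A"
  shows "((\<lambda>x. (A + al*(x-x0))^2/(B*(L - (A + al*(x-x0))))) has_real_derivative
          al*A*(2*L-A)/(B*(L-A)^2)) (at x0)"
proof -
  have nz: "L - A \<noteq> 0" using assms by simp
  show ?thesis
    apply (rule derivative_eq_intros refl | (use assms nz in \<open>simp; fail\<close>))+
    using assms nz apply (simp add: divide_simps power2_eq_square)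
    apply (simp add: algebra_simps)
    done
qed

lemma dk_deriv:
  fixes a b c d J s x0 :: real
  assumes "x0 \<noteq> 0"
  shows "((\<lambda>x. a + b*J/x + (c + d*J/x)*s) has_real_derivative -(b*J + d*J*s)/x0^2) (at x0)"
  apply (rule derivative_eq_intros refl | (use assms in \<open>simp; fail\<close>))+
  using assms by (simp add: field_simps power2_eq_square)

lemma dr_deriv:
  fixes a b c d J k r0 :: real
  assumes "r0 > 1"
  shows "((\<lambda>y. a + b*J/k + (c + d*J/k)*ln(y/(y-1))) has_real_derivative -(c + d*J/k)/(r0*(r0-1))) (at r0)"
proof -
  have nz: "r0 - 1 \<noteq> 0" "r0 \<noteq> 0" "r0/(r0-1) > 0" using assms by auto
  show ?thesis
    apply (rule derivative_eq_intros refl | (use nz in \<open>simp; fail\<close>))+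
    using nz by (simp add: divide_simps power2_eq_square)
qed



lemma tL_alt: "Lr > 0 \<Longrightarrow> A < Lr \<Longrightarrow> tL Lr A = A*(2*Lr-A)/(Lr*(Lr-A)^2)"
  unfolding tL_def by (simp add: divide_simps power2_eq_square) (simp add: algebra_simps)

lemma stat_k:
  fixes L :: nat
  assumes L: "L > 0" and par: "\<forall>i<m. J i > 0 \<and> a i > 0 \<and> b i > 0 \<and> c i > 0 \<and> d i > 0"
    and lam: "lam > 0" and pp: "\<forall>i<m. p i > 0" and opt: "optimal m L lam p J a b c d k r"
    and i: "i < m"
  shows "(a i*r i + c i)*tL (real L) (Lam m lam p J a b c d k r) = J i*(b i + d i*ss(r i))/(k i)^2"
proof -
  define La where "La = Lam m lam p J a b c d k r"
  have fe: "feasible m L lam p J a b c d k r" and mn: "\<And>k' r'. feasible m L lam p J a b c d k' r' \<Longrightarrow>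
      objective m L lam p J a b c d k r \<le> objective m L lam p J a b c d k' r'"
    using opt unfolding optimal_def by auto
  have kr: "\<forall>j<m. k j > 0 \<and> r j > 1" and LaL: "La < real L"
    using fe unfolding feasible_def La_def by auto
  have pi: "p i > 0" and pr: "J i > 0" "a i > 0" "b i > 0" "c i > 0" "d i > 0" using pp par i by auto
  have ki: "k i > 0" and ri: "r i > 1" using kr i by auto
  define al where "al = lam*p i*(a i*r i + c i)"
  have alp: "al > 0" unfolding al_def using lam pi pr ri by (intro mult_pos_pos add_pos_pos) auto
  have LamU: "Lam m lam p J a b c d (k(i:=x)) r = La + al*(x - k i)" for x
  proof -
    have "(\<Sum>j<m. p j * U J a b c d (k(i:=x)) r j) = (\<Sum>j<m. p j * U J a b c d k r j)
       + (p i * U J a b c d (k(i:=x)) r i - p i * U J a b c d k r i)"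
      by (rule sum_upd[OF i]) (simp add: U_def)
    moreover have "p i * U J a b c d (k(i:=x)) r i - p i * U J a b c d k r i = p i*(a i*r i + c i)*(x - k i)"
      unfolding U_def by (simp add: algebra_simps)
    ultimately have "(\<Sum>j<m. p j * U J a b c d (k(i:=x)) r j) = (\<Sum>j<m. p j * U J a b c d k r j)
       + p i*(a i*r i + c i)*(x - k i)" by simp
    then have "Lam m lam p J a b c d (k(i:=x)) r = lam * ((\<Sum>j<m. p j * U J a b c d k r j)
       + p i*(a i*r i + c i)*(x - k i))" unfolding Lam_def by simp
    also have "\<dots> = La + al*(x - k i)" unfolding La_def Lam_def al_def by (simp add: algebra_simps)
    finally show ?thesis .
  qed
  define S0 where "S0 = (\<Sum>j<m. p j * Ds J a b c d k r j)"
  define D where "D x = a i + b i*J i/x + (c i + d i*J i/x)*ss(r i)" for x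
  have DsU: "(\<Sum>j<m. p j * Ds J a b c d (k(i:=x)) r j) = S0 + p i * (D x - D (k i))" for x
  proof -
    have "(\<Sum>j<m. p j * Ds J a b c d (k(i:=x)) r j) = (\<Sum>j<m. p j * Ds J a b c d k r j)
       + (p i * Ds J a b c d (k(i:=x)) r i - p i * Ds J a b c d k r i)"
      by (rule sum_upd[OF i]) (simp add: Ds_def)
    moreover have "p i * Ds J a b c d (k(i:=x)) r i - p i * Ds J a b c d k r i = p i * (D x - D (k i))"
      unfolding Ds_def D_def ss_def by (simp add: algebra_simps)
    ultimately show ?thesis unfolding S0_def by simp
  qed
  define f where "f x = objective m L lam p J a b c d (k(i:=x)) r" for x
  have feq: "f = (\<lambda>x. (La + al*(x - k i))^2/((lam*real L)*(real L - (La + al*(x - k i)))) + S0 + p i * (D x - D (k i)))"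
    unfolding f_def objective_def Dq_def by (rule ext) (simp add: LamU DsU)
  define del where "del = min (k i) ((real L - La)/(al+1))"
  have der: "(f has_real_derivative
     (al*La*(2*real L-La)/((lam*real L)*(real L-La)^2) + 0 + p i * (-(b i*J i + d i*J i*ss(r i))/(k i)^2 - 0))) (at (k i))"
    unfolding feq D_def
    by (intro DERIV_add DERIV_cmult DERIV_diff DERIV_const dq_deriv dk_deriv) (use L lam LaL ki in auto)
  have delp: "0 < del" unfolding del_def using ki LaL alp by simp
  have lm: "\<forall>y. \<bar>k i - y\<bar> < del \<longrightarrow> f (k i) \<le> f y"
  proof (intro allI impI)
    fix y assume y: "\<bar>k i - y\<bar> < del"
    have yp: "y > 0" using y ki unfolding del_def by auto
    have "al*(y - k i) \<le> al*\<bar>k i - y\<bar>" using alp by (intro mult_left_mono) auto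
    also have "\<dots> \<le> al*((real L - La)/(al+1))" using y alp unfolding del_def by (intro mult_left_mono) auto
    also have "\<dots> < real L - La" using alp LaL by (simp add: divide_simps)
    finally have "La + al*(y - k i) < real L" by simp
    then have "feasible m L lam p J a b c d (k(i:=y)) r"
      unfolding feasible_def LamU using kr yp by auto
    from mn[OF this] show "f (k i) \<le> f y" unfolding f_def by simp
  qed
  have z: "al*La*(2*real L-La)/((lam*real L)*(real L-La)^2) + 0 + p i * (-(b i*J i + d i*J i*ss(r i))/(k i)^2 - 0) = 0"
    by (rule DERIV_local_min[OF der delp lm])
  have "al*La*(2*real L-La)/((lam*real L)*(real L-La)^2) = p i * ((a i*r i + c i)*tL (real L) La)"
    unfolding al_def using tL_alt[of "real L" La] L LaL lam by (simp add: divide_simps)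
  then have "p i * ((a i*r i + c i)*tL (real L) La - J i*(b i + d i*ss(r i))/(k i)^2) = 0"
    using z by (simp add: algebra_simps add_divide_distrib diff_divide_distrib)
  then show ?thesis using pi unfolding La_def by simp
qed

lemma stat_r:
  fixes L :: nat
  assumes L: "L > 0" and par: "\<forall>i<m. J i > 0 \<and> a i > 0 \<and> b i > 0 \<and> c i > 0 \<and> d i > 0"
    and lam: "lam > 0" and pp: "\<forall>i<m. p i > 0" and opt: "optimal m L lam p J a b c d k r"
    and i: "i < m"
  shows "(a i*k i + b i*J i)*tL (real L) (Lam m lam p J a b c d k r) = (c i + d i*J i/k i)/(r i*(r i - 1))"
proof -
  define La where "La = Lam m lam p J a b c d k r"
  have fe: "feasible m L lam p J a b c d k r" and mn: "\<And>k' r'. feasible m L lam p J a b c d k' r' \<Longrightarrow>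
      objective m L lam p J a b c d k r \<le> objective m L lam p J a b c d k' r'"
    using opt unfolding optimal_def by auto
  have kr: "\<forall>j<m. k j > 0 \<and> r j > 1" and LaL: "La < real L"
    using fe unfolding feasible_def La_def by auto
  have pi: "p i > 0" and pr: "J i > 0" "a i > 0" "b i > 0" "c i > 0" "d i > 0" using pp par i by auto
  have ki: "k i > 0" and ri: "r i > 1" using kr i by auto
  define al where "al = lam*p i*(a i*k i + b i*J i)"
  have alp: "al > 0" unfolding al_def using lam pi pr ki by (intro mult_pos_pos add_pos_pos) auto
  have LamU: "Lam m lam p J a b c d k (r(i:=x)) = La + al*(x - r i)" for x
  proof -
    have "(\<Sum>j<m. p j * U J a b c d k (r(i:=x)) j) = (\<Sum>j<m. p j * U J a b c d k r j)
       + (p i * U J a b c d k (r(i:=x)) i - p i * U J a b c d k r i)"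
      by (rule sum_upd[OF i]) (simp add: U_def)
    moreover have "p i * U J a b c d k (r(i:=x)) i - p i * U J a b c d k r i = p i*(a i*k i + b i*J i)*(x - r i)"
      unfolding U_def by (simp add: algebra_simps)
    ultimately have "(\<Sum>j<m. p j * U J a b c d k (r(i:=x)) j) = (\<Sum>j<m. p j * U J a b c d k r j)
       + p i*(a i*k i + b i*J i)*(x - r i)" by simp
    then have "Lam m lam p J a b c d k (r(i:=x)) = lam * ((\<Sum>j<m. p j * U J a b c d k r j)
       + p i*(a i*k i + b i*J i)*(x - r i))" unfolding Lam_def by simp
    also have "\<dots> = La + al*(x - r i)" unfolding La_def Lam_def al_def by (simp add: algebra_simps)
    finally show ?thesis .
  qed
  define S0 where "S0 = (\<Sum>j<m. p j * Ds J a b c d k r j)"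
  define D where "D x = a i + b i*J i/k i + (c i + d i*J i/k i)*ln(x/(x-1))" for x
  have DsU: "(\<Sum>j<m. p j * Ds J a b c d k (r(i:=x)) j) = S0 + p i * (D x - D (r i))" for x
  proof -
    have "(\<Sum>j<m. p j * Ds J a b c d k (r(i:=x)) j) = (\<Sum>j<m. p j * Ds J a b c d k r j)
       + (p i * Ds J a b c d k (r(i:=x)) i - p i * Ds J a b c d k r i)"
      by (rule sum_upd[OF i]) (simp add: Ds_def)
    moreover have "p i * Ds J a b c d k (r(i:=x)) i - p i * Ds J a b c d k r i = p i * (D x - D (r i))"
      unfolding Ds_def D_def by (simp add: algebra_simps)
    ultimately show ?thesis unfolding S0_def by simp
  qed
  define f where "f x = objective m L lam p J a b c d k (r(i:=x))" for x
  have feq: "f = (\<lambda>x. (La + al*(x - r i))^2/((lam*real L)*(real L - (La + al*(x - r i)))) + S0 + p i * (D x - D (r i)))"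
    unfolding f_def objective_def Dq_def by (rule ext) (simp add: LamU DsU)
  define del where "del = min (r i - 1) ((real L - La)/(al+1))"
  have der: "(f has_real_derivative
     (al*La*(2*real L-La)/((lam*real L)*(real L-La)^2) + 0 + p i * (-(c i + d i*J i/k i)/(r i*(r i - 1)) - 0))) (at (r i))"
    unfolding feq D_def
    by (intro DERIV_add DERIV_cmult DERIV_diff DERIV_const dq_deriv dr_deriv) (use L lam LaL ri in auto)
  have delp: "0 < del" unfolding del_def using ri LaL alp by simp
  have lm: "\<forall>y. \<bar>r i - y\<bar> < del \<longrightarrow> f (r i) \<le> f y"
  proof (intro allI impI)
    fix y assume y: "\<bar>r i - y\<bar> < del"
    have yp: "y > 1" using y ri unfolding del_def by auto
    have "al*(y - r i) \<le> al*\<bar>r i - y\<bar>" using alp by (intro mult_left_mono) auto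
    also have "\<dots> \<le> al*((real L - La)/(al+1))" using y alp unfolding del_def by (intro mult_left_mono) auto
    also have "\<dots> < real L - La" using alp LaL by (simp add: divide_simps)
    finally have "La + al*(y - r i) < real L" by simp
    then have "feasible m L lam p J a b c d k (r(i:=y))"
      unfolding feasible_def LamU using kr yp by auto
    from mn[OF this] show "f (r i) \<le> f y" unfolding f_def by simp
  qed
  have z: "al*La*(2*real L-La)/((lam*real L)*(real L-La)^2) + 0 + p i * (-(c i + d i*J i/k i)/(r i*(r i - 1)) - 0) = 0"
    by (rule DERIV_local_min[OF der delp lm])
  have "al*La*(2*real L-La)/((lam*real L)*(real L-La)^2) = p i * ((a i*k i + b i*J i)*tL (real L) La)"
    unfolding al_def using tL_alt[of "real L" La] L LaL lam by (simp add: divide_simps)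
  then have "p i * ((a i*k i + b i*J i)*tL (real L) La - (c i + d i*J i/k i)/(r i*(r i - 1))) = 0"
    using z by (simp add: algebra_simps add_divide_distrib diff_divide_distrib)
  then show ?thesis using pi unfolding La_def by simp
qed



theorem corollary1:
  fixes L :: nat
  assumes "L > 0"
  shows "\<exists>NF KF RF :: real \<Rightarrow> real \<Rightarrow> real \<Rightarrow> real \<Rightarrow> real \<Rightarrow> real \<Rightarrow> real.
     (\<forall>Ji ai bi ci di. Ji > 0 \<and> ai > 0 \<and> bi > 0 \<and> ci > 0 \<and> di > 0 \<longrightarrow>
        strictly_decreasing_pos (NF Ji ai bi ci di) \<and>
        strictly_decreasing_pos (KF Ji ai bi ci di) \<and>
        strictly_decreasing_pos (RF Ji ai bi ci di)) \<and>
     (\<forall>(m::nat) J a b c d (lam::real) p k r.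
        m \<ge> 1 \<longrightarrow>
        (\<forall>i<m. J i > 0 \<and> a i > 0 \<and> b i > 0 \<and> c i > 0 \<and> d i > 0) \<longrightarrow>
        lam > 0 \<longrightarrow> (\<forall>i<m. p i > 0) \<longrightarrow> (\<Sum>i<m. p i) = 1 \<longrightarrow>
        optimal m L lam p J a b c d k r \<longrightarrow>
        (\<forall>k' r'. optimal m L lam p J a b c d k' r' \<longrightarrow> (\<forall>i<m. k' i = k i \<and> r' i = r i)) \<longrightarrow>
        (let \<Lambda> = Lam m lam p J a b c d k r;
             Q = \<Lambda>\<^sup>2 / (real L * (real L - \<Lambda>))
         in \<forall>i<m. k i * r i = NF (J i) (a i) (b i) (c i) (d i) Q \<and>
                  k i = KF (J i) (a i) (b i) (c i) (d i) Q \<and>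
                  r i = RF (J i) (a i) (b i) (c i) (d i) Q))"
proof -
  have Lr: "real L > 0" using assms by simp
  show ?thesis
  proof (rule exI[of _ "NF (real L)"], rule exI[of _ "KF (real L)"], rule exI[of _ "RF (real L)"], intro conjI, goal_cases)
    case 1
    show ?case by (intro allI impI conjI NF_dec[OF Lr] KF_dec[OF Lr] RF_dec[OF Lr]; simp)
  next
    case 2
    show ?case
    proof (intro allI impI, goal_cases)
    case (1 m J a b c d lam p k r)
    have m: "m \<ge> 1" and par: "\<forall>i<m. J i > 0 \<and> a i > 0 \<and> b i > 0 \<and> c i > 0 \<and> d i > 0"
      and lam: "lam > 0" and pp: "\<forall>i<m. p i > 0"
      and opt: "optimal m L lam p J a b c d k r" using 1(1) apply simp using 1(2) apply simp
      using 1(3) apply simp using 1(4) apply simp using 1(6) apply simp done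
    define La where "La = Lam m lam p J a b c d k r"
    have kr: "\<forall>j<m. k j > 0 \<and> r j > 1" and LaL: "La < real L"
      using opt unfolding optimal_def feasible_def La_def by auto
    have La0: "La > 0"
    proof -
      have "(\<Sum>j<m. p j * U J a b c d k r j) > 0"
      proof (rule sum_pos)
        show "finite {..<m}" by simp
        show "{..<m} \<noteq> {}" using m by (metis lessThan_iff less_le_trans zero_less_one emptyE)
        fix j assume "j \<in> {..<m}"
        then have j: "j < m" by simp
        then have "p j > 0" "J j > 0" "a j > 0" "b j > 0" "c j > 0" "d j > 0" "k j > 0" "r j > 1"
          using par pp kr by auto
        then show "0 < p j * U J a b c d k r j" unfolding U_def
          by (intro mult_pos_pos add_pos_pos) auto
      qed
      then show ?thesis unfolding La_def Lam_def using lam by simp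
    qed
    define Qv where "Qv = La\<^sup>2 / (real L * (real L - La))"
    have QQ: "Qv = Qf (real L) La" unfolding Qv_def Qf_def by simp
    have Qp: "Qv > 0" unfolding QQ using Qf_pos[OF Lr La0 LaL] .
    have tQ: "tau (real L) Qv = tL (real L) La" unfolding tau_def QQ using Lq_Qf[OF Lr La0 LaL] by simp
    have "\<forall>i<m. k i * r i = NF (real L) (J i) (a i) (b i) (c i) (d i) Qv \<and>
                  k i = KF (real L) (J i) (a i) (b i) (c i) (d i) Qv \<and>
                  r i = RF (real L) (J i) (a i) (b i) (c i) (d i) Qv"
    proof (intro allI impI)
      fix i assume i: "i < m"
      have pr: "J i > 0" "a i > 0" "b i > 0" "c i > 0" "d i > 0" using par i by auto
      have ki: "k i > 0" and ri: "r i > 1" using kr i by auto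
      have E1: "(a i*r i + c i)*tL (real L) La = J i*(b i + d i*ss(r i))/(k i)^2"
        using stat_k[OF assms par lam pp opt i] unfolding La_def .
      have E2: "(a i*k i + b i*J i)*tL (real L) La = (c i + d i*J i/k i)/(r i*(r i - 1))"
        using stat_r[OF assms par lam pp opt i] unfolding La_def .
      have cc: "Kr (J i) (a i) (b i) (c i) (d i) (r i) = k i \<and> Tr (J i) (a i) (b i) (c i) (d i) (r i) = tL (real L) La"
        by (rule class_char[OF pr ki ri]) (use E1 E2 in \<open>simp_all add: mult.commute\<close>)
      have RFe: "RF (real L) (J i) (a i) (b i) (c i) (d i) Qv = r i"
        using RF_eq[OF Lr pr Qp ri] cc tQ by simp
      have KFe: "KF (real L) (J i) (a i) (b i) (c i) (d i) Qv = k i"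
        unfolding KF_def RFe using cc by simp
      show "k i * r i = NF (real L) (J i) (a i) (b i) (c i) (d i) Qv \<and>
                  k i = KF (real L) (J i) (a i) (b i) (c i) (d i) Qv \<and>
                  r i = RF (real L) (J i) (a i) (b i) (c i) (d i) Qv"
        unfolding NF_def using RFe KFe by simp
    qed
    then show ?case
      by (simp only: Let_def La_def Qv_def)
  qed
  qed
qed


end
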